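(* $f_3(5,3)=\frac{15}{8}=\rho_3(C_5\vee I_3)$, where $C_5\vee I_3$ is the join of the $5$-cycle with an independent set of $3$ vertices.
   Context: $\mathcal{G}(\Delta,\omega)$ denotes the class of finite simple graphs $G$ with maximum degree $\Delta(G)\le\Delta$ and clique number $\omega(G)\le\omega$. $k_t(G)$ is the number of copies of $K_t$ in $G$ and $\rho_t(G)=k_t(G)/|V(G)|$. $f_t(\Delta,\omega)=\sup\{\rho_t(G): G\in\mathcal{G}(\Delta,\omega),\ |V(G)|\ge 1\}$. The join $A\vee B$ of two vertex-disjoint graphs is their disjoint union together with all edges between $V(A)$ and $V(B)$. *)

theory Defs
  imports Complex_Main
begin

text \<open>A finite simple graph on natural-number vertices: a vertex set V and a set E of
  2-element subsets of V (edges).  Every finite simple graph is isomorphic to one of these.\<close>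

type_synonym graph = "nat set \<times> nat set set"

definition verts :: "graph \<Rightarrow> nat set" where "verts G = fst G"
definition edges :: "graph \<Rightarrow> nat set set" where "edges G = snd G"

definition simple_graph :: "graph \<Rightarrow> bool" where
  "simple_graph G \<longleftrightarrow> finite (verts G) \<and>
     (\<forall>e\<in>edges G. card e = 2 \<and> e \<subseteq> verts G)"

definition degree :: "graph \<Rightarrow> nat \<Rightarrow> nat" where
  "degree G v = card {e \<in> edges G. v \<in> e}"

definition max_degree :: "graph \<Rightarrow> nat" where
  "max_degree G = Max (insert 0 (degree G ` verts G))"

definition is_clique :: "graph \<Rightarrow> nat set \<Rightarrow> bool" where
  "is_clique G S \<longleftrightarrow> S \<subseteq> verts G \<and>
     (\<forall>u\<in>S. \<forall>v\<in>S. u \<noteq> v \<longrightarrow> {u, v} \<in> edges G)"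

definition clique_number :: "graph \<Rightarrow> nat" where
  "clique_number G = Max {card S | S. is_clique G S}"

definition k_t :: "nat \<Rightarrow> graph \<Rightarrow> nat" where
  "k_t t G = card {S. is_clique G S \<and> card S = t}"

definition rho :: "nat \<Rightarrow> graph \<Rightarrow> real" where
  "rho t G = real (k_t t G) / real (card (verts G))"

definition graph_class :: "nat \<Rightarrow> nat \<Rightarrow> graph set" where
  "graph_class \<Delta> \<omega> = {G. simple_graph G \<and> max_degree G \<le> \<Delta> \<and> clique_number G \<le> \<omega>}"

definition f_t :: "nat \<Rightarrow> nat \<Rightarrow> nat \<Rightarrow> real" where
  "f_t t \<Delta> \<omega> = Sup {rho t G | G. G \<in> graph_class \<Delta> \<omega> \<and> card (verts G) \<ge> 1}"

text \<open>Join of two (vertex-disjoint) graphs.\<close>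
definition join :: "graph \<Rightarrow> graph \<Rightarrow> graph" where
  "join A B = (verts A \<union> verts B,
     edges A \<union> edges B \<union> {{a, b} | a b. a \<in> verts A \<and> b \<in> verts B})"

definition C5 :: graph where
  "C5 = ({0..4}, {{i, (i + 1) mod 5} | i. i < 5})"

definition I3 :: graph where
  "I3 = ({5, 6, 7}, {})"

end

theory Submission imports Defs begin

definition adj :: "graph \<Rightarrow> nat \<Rightarrow> nat \<Rightarrow> bool" where
  "adj G u v \<longleftrightarrow> {u, v} \<in> edges G"
definition nb :: "graph \<Rightarrow> nat \<Rightarrow> nat set" where
  "nb G v = {u. adj G v u}"
definition tp :: "graph \<Rightarrow> nat \<Rightarrow> nat" where
  "tp G v = card {(p, q). adj G v p \<and> adj G v q \<and> adj G p q}"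

lemma adj_sym: "adj G u v = adj G v u"
  by (simp add: adj_def insert_commute)

lemma adj_props:
  assumes "simple_graph G" "adj G u v"
  shows "u \<noteq> v" "u \<in> verts G" "v \<in> verts G"
proof -
  have e: "{u, v} \<in> edges G" using assms(2) by (simp add: adj_def)
  then have c: "card {u, v} = 2" and s: "{u, v} \<subseteq> verts G"
    using assms(1) by (auto simp: simple_graph_def)
  show "u \<noteq> v" proof assume "u = v" then show False using c by simp qed
  show "u \<in> verts G" "v \<in> verts G" using s by auto
qed

lemma adj_irrefl: "simple_graph G \<Longrightarrow> \<not> adj G u u"
  using adj_props by blast

lemma nb_sub: "simple_graph G \<Longrightarrow> nb G v \<subseteq> verts G"
  using adj_props unfolding nb_def by blast

lemma finite_V: "simple_graph G \<Longrightarrow> finite (verts G)"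
  by (simp add: simple_graph_def)

lemma finite_nb: "simple_graph G \<Longrightarrow> finite (nb G v)"
  using nb_sub finite_V finite_subset by blast

lemma card_nb: assumes "simple_graph G" shows "card (nb G v) = degree G v"
proof -
  have "bij_betw (\<lambda>u. {v, u}) (nb G v) {e \<in> edges G. v \<in> e}"
  proof (rule bij_betwI')
    fix x y assume "x \<in> nb G v" "y \<in> nb G v"
    show "({v, x} = {v, y}) = (x = y)" by (auto simp: doubleton_eq_iff)
  next
    fix x assume "x \<in> nb G v" thus "{v, x} \<in> {e \<in> edges G. v \<in> e}"
      by (simp add: nb_def adj_def)
  next
    fix e assume e: "e \<in> {e \<in> edges G. v \<in> e}"
    then have "card e = 2" using assms by (simp add: simple_graph_def)
    then obtain x y where "e = {x, y}" "x \<noteq> y" by (auto simp: card_2_iff)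
    with e show "\<exists>u\<in>nb G v. e = {v, u}"
      by (auto simp: nb_def adj_def insert_commute)
  qed
  thus ?thesis by (simp add: bij_betw_same_card degree_def)
qed

lemma nb_le5:
  assumes "simple_graph G" "max_degree G \<le> 5"
  shows "card (nb G v) \<le> 5"
proof (cases "v \<in> verts G")
  case True
  have "degree G v \<le> max_degree G" unfolding max_degree_def
    using True finite_V[OF assms(1)] by (intro Max_ge) auto
  thus ?thesis using card_nb[OF assms(1)] assms(2) by simp
next
  case False
  then have "nb G v = {}" using nb_sub[OF assms(1)] adj_props[OF assms(1)] adj_sym
    unfolding nb_def by blast
  thus ?thesis by simp
qed

lemma noK4:
  assumes "simple_graph G" "clique_number G \<le> 3"
    "adj G a b" "adj G a c" "adj G a d" "adj G b c" "adj G b d" "adj G c d"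
  shows False
proof -
  have cl: "is_clique G {a,b,c,d}" using assms adj_props[OF assms(1)]
    unfolding is_clique_def adj_def by (auto simp: insert_commute)
  have "card {a,b,c,d} = 4" using assms adj_props[OF assms(1)] by auto
  moreover have "card {a,b,c,d} \<le> clique_number G" unfolding clique_number_def
  proof (rule Max_ge)
    have "{card S |S. is_clique G S} \<subseteq> card ` Pow (verts G)"
      unfolding is_clique_def by auto
    thus "finite {card S |S. is_clique G S}"
      using finite_V[OF assms(1)] finite_subset by blast
    show "card {a,b,c,d} \<in> {card S |S. is_clique G S}" using cl by blast
  qed
  ultimately show False using assms(2) by simp
qed



lemma tp_set_eq: "{(p, q). adj G v p \<and> adj G v q \<and> adj G p q} = Sigma (nb G v) (\<lambda>p. nb G p \<inter> nb G v)"
  by (auto simp: nb_def)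

lemma tp_sum: assumes "simple_graph G"
  shows "tp G v = (\<Sum>p\<in>nb G v. card (nb G p \<inter> nb G v))"
  unfolding tp_def tp_set_eq using finite_nb[OF assms] by (simp add: card_SigmaI)

lemma finite_tpset: assumes "simple_graph G"
  shows "finite {(p, q). adj G v p \<and> adj G v q \<and> adj G p q}"
  unfolding tp_set_eq using finite_nb[OF assms] by auto

lemma even_sym:
  fixes R :: "(nat \<times> nat) set"
  assumes "finite R" "\<And>p q. (p, q) \<in> R \<Longrightarrow> (q, p) \<in> R" "\<And>p. (p, p) \<notin> R"
  shows "even (card R)"
proof -
  let ?R1 = "{x \<in> R. fst x < snd x}" and ?R2 = "{x \<in> R. snd x < fst x}"
  have "R = ?R1 \<union> ?R2" using assms(3) by (auto simp: neq_iff) (metis linorder_neqE_nat prod.collapse)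
  moreover have "?R2 = prod.swap ` ?R1" using assms(2) by force
  moreover have "card (prod.swap ` ?R1) = card ?R1" by (rule card_image) simp
  moreover have "card (?R1 \<union> ?R2) = card ?R1 + card ?R2"
    by (rule card_Un_disjoint) (use assms(1) in auto)
  ultimately show ?thesis by simp
qed

lemma tp_even: assumes "simple_graph G" shows "even (tp G v)"
  unfolding tp_def
  by (rule even_sym[OF finite_tpset[OF assms]]) (auto simp: adj_sym adj_irrefl[OF assms])

definition T3 :: "graph \<Rightarrow> (nat \<times> nat \<times> nat) set" where
  "T3 G = {(a, b, c). adj G a b \<and> adj G a c \<and> adj G b c}"

lemma sum_tp_T3: assumes "simple_graph G"
  shows "(\<Sum>v\<in>verts G. tp G v) = card (T3 G)"
proof -
  have "T3 G = Sigma (verts G) (\<lambda>a. {(p, q). adj G a p \<and> adj G a q \<and> adj G p q})"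
    unfolding T3_def using adj_props[OF assms] by auto
  thus ?thesis using finite_V[OF assms] finite_tpset[OF assms]
    by (simp add: card_SigmaI tp_def)
qed

lemma T3_k3: assumes sg: "simple_graph G"
  shows "card (T3 G) = 6 * k_t 3 G"
proof -
  define Tri where "Tri = {S. is_clique G S \<and> card S = 3}"
  define fib where "fib S = {x \<in> T3 G. (case x of (a, b, c) \<Rightarrow> {a, b, c}) = S}" for S
  have finTri: "finite Tri" unfolding Tri_def is_clique_def
    using finite_V[OF sg] by (auto intro: finite_subset[of _ "Pow (verts G)"])
  have cover: "T3 G = (\<Union>S\<in>Tri. fib S)"
  proof
    show "T3 G \<subseteq> (\<Union>S\<in>Tri. fib S)"
    proof
      fix x assume x: "x \<in> T3 G"
      obtain a b c where abc: "x = (a, b, c)" by (cases x) auto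
      have adjs: "adj G a b" "adj G a c" "adj G b c" using x abc by (auto simp: T3_def)
      have "{a, b, c} \<in> Tri" unfolding Tri_def is_clique_def
        using adjs adj_props[OF sg] adj_sym[of G]
        by (auto simp: adj_def insert_commute)
      thus "x \<in> (\<Union>S\<in>Tri. fib S)" using x abc by (auto simp: fib_def)
    qed
  qed (auto simp: fib_def)
  have fib6: "card (fib S) = 6" if S: "S \<in> Tri" for S
  proof -
    obtain x y z where xyz: "S = {x, y, z}" "x \<noteq> y" "y \<noteq> z" "x \<noteq> z"
      using S by (auto simp: Tri_def card_3_iff)
    have cl: "is_clique G S" using S by (simp add: Tri_def)
    have a: "adj G x y" "adj G x z" "adj G y z" "adj G y x" "adj G z x" "adj G z y"
      using cl xyz unfolding is_clique_def adj_def by (auto simp: insert_commute)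
    have "fib S = {(x,y,z),(x,z,y),(y,x,z),(y,z,x),(z,x,y),(z,y,x)}"
    proof
      show "fib S \<subseteq> {(x,y,z),(x,z,y),(y,x,z),(y,z,x),(z,x,y),(z,y,x)}"
      proof
        fix t assume t: "t \<in> fib S"
        obtain a b c where abc: "t = (a, b, c)" by (cases t) auto
        have d: "a \<noteq> b" "a \<noteq> c" "b \<noteq> c" using t abc adj_props(1)[OF sg]
          by (auto simp: fib_def T3_def)
        have e: "{a, b, c} = {x, y, z}" using t abc xyz by (auto simp: fib_def)
        then have "a \<in> {x,y,z}" "b \<in> {x,y,z}" "c \<in> {x,y,z}" by blast+
        then show "t \<in> {(x,y,z),(x,z,y),(y,x,z),(y,z,x),(z,x,y),(z,y,x)}"
          using d e abc xyz by auto
      qed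
      show "{(x,y,z),(x,z,y),(y,x,z),(y,z,x),(z,x,y),(z,y,x)} \<subseteq> fib S"
        using a xyz by (auto simp: fib_def T3_def insert_commute)
    qed
    thus ?thesis using xyz by simp
  qed
  have "card (T3 G) = (\<Sum>S\<in>Tri. card (fib S))"
    unfolding cover
  proof (rule card_UN_disjoint[OF finTri])
    have "finite (T3 G)"
    proof -
      have "T3 G \<subseteq> verts G \<times> verts G \<times> verts G" unfolding T3_def
        using adj_props[OF sg] by auto
      thus ?thesis using finite_V[OF sg] finite_subset by blast
    qed
    thus "\<forall>i\<in>Tri. finite (fib i)" by (auto simp: fib_def)
    show "\<forall>i\<in>Tri. \<forall>j\<in>Tri. i \<noteq> j \<longrightarrow> fib i \<inter> fib j = {}" by (auto simp: fib_def)
  qed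
  also have "\<dots> = 6 * card Tri" using fib6 by simp
  finally show ?thesis by (simp add: k_t_def Tri_def)
qed



lemma small_prod: "(a::nat) + b \<le> 5 \<Longrightarrow> a * b \<le> 6 \<and> (a * b = 6 \<longrightarrow> (a = 2 \<and> b = 3) \<or> (a = 3 \<and> b = 2))"
proof -
  assume h: "a + b \<le> 5"
  then have "a = 0 \<or> a = 1 \<or> a = 2 \<or> a = 3 \<or> a = 4 \<or> a = 5" by arith
  moreover have "b = 0 \<or> b = 1 \<or> b = 2 \<or> b = 3 \<or> b = 4 \<or> b = 5" using h by arith
  ultimately show ?thesis using h by auto
qed

lemma small_prod2: "(k::nat) \<le> 2 \<Longrightarrow> k * (k - 1) \<le> 2"
proof -
  assume "k \<le> 2" then have "k = 0 \<or> k = 1 \<or> k = 2" by arith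
  then show ?thesis by auto
qed

lemma mantel:
  assumes sg: "simple_graph G" and cn: "clique_number G \<le> 3" and d5: "\<And>u. card (nb G u) \<le> 5"
  shows "tp G v \<le> 12 \<and> (tp G v = 12 \<longrightarrow> (\<exists>A B. A \<inter> B = {} \<and> A \<union> B = nb G v \<and>
     (\<forall>p\<in>A. \<forall>q\<in>B. adj G p q) \<and> (\<forall>p\<in>A. \<forall>q\<in>A. \<not> adj G p q) \<and> (\<forall>p\<in>B. \<forall>q\<in>B. \<not> adj G p q)
     \<and> card A * card B = 6 \<and> card A + card B \<le> 5))"
proof (cases "nb G v = {}")
  case True
  then show ?thesis using tp_sum[OF sg, of v] by simp
next
  case False
  define N where "N = nb G v"
  have finN: "finite N" using finite_nb[OF sg] N_def by simp
  define dN where "dN p = card (nb G p \<inter> N)" for p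
  have "Max (dN ` N) \<in> dN ` N" using finN False N_def by (intro Max_in) auto
  then obtain x where xN: "x \<in> N" and xmax: "dN x = Max (dN ` N)" by auto
  have dle: "dN y \<le> dN x" if "y \<in> N" for y using xmax that finN by simp
  define A where "A = nb G x \<inter> N"
  define B where "B = N - A"
  define D where "D = card A"
  have DdN: "D = dN x" by (simp add: D_def A_def dN_def)
  have finA: "finite A" and finB: "finite B" using finN by (auto simp: A_def B_def)
  have AB: "A \<inter> B = {}" "A \<union> B = N" by (auto simp: A_def B_def)
  have Aind: "\<not> adj G p q" if "p \<in> A" "q \<in> A" for p q
  proof
    assume "adj G p q"
    moreover have "adj G v x" "adj G v p" "adj G v q" "adj G x p" "adj G x q"
      using that xN by (auto simp: A_def N_def nb_def)
    ultimately show False using noK4[OF sg cn, of v x p q] by blast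
  qed
  define E1 where "E1 = Sigma B (\<lambda>p. nb G p \<inter> N)"
  define E2 where "E2 = {(p, q). p \<in> A \<and> q \<in> B \<and> adj G p q}"
  have Eeq: "{(p, q). adj G v p \<and> adj G v q \<and> adj G p q} = E1 \<union> E2"
  proof
    show "{(p, q). adj G v p \<and> adj G v q \<and> adj G p q} \<subseteq> E1 \<union> E2"
    proof
      fix t assume t: "t \<in> {(p, q). adj G v p \<and> adj G v q \<and> adj G p q}"
      obtain p q where pq: "t = (p, q)" by (cases t) auto
      have "p \<in> N" "q \<in> N" "adj G p q" using t pq by (auto simp: N_def nb_def)
      then show "t \<in> E1 \<union> E2" using Aind pq
        by (cases "p \<in> A") (auto simp: E1_def E2_def B_def nb_def)
    qed
    show "E1 \<union> E2 \<subseteq> {(p, q). adj G v p \<and> adj G v q \<and> adj G p q}"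
      by (auto simp: E1_def E2_def B_def A_def N_def nb_def)
  qed
  have finE2: "finite E2" and E2sub: "E2 \<subseteq> A \<times> B" using finA finB
    by (auto simp: E2_def intro: finite_subset[of _ "A \<times> B"])
  have cE: "tp G v = card E1 + card E2" unfolding tp_def Eeq
    by (rule card_Un_disjoint) (use finB finN finE2 AB in \<open>auto simp: E1_def E2_def\<close>)
  have cE1: "card E1 = (\<Sum>p\<in>B. dN p)" unfolding E1_def dN_def
    using finB finN by (simp add: card_SigmaI)
  have sE1: "(\<Sum>p\<in>B. dN p) \<le> (\<Sum>p\<in>B. D)"
    using dle DdN by (intro sum_mono) (auto simp: B_def)
  have cE2: "card E2 \<le> D * card B" using card_mono[OF _ E2sub] finA finB
    by (simp add: D_def card_cartesian_product)
  have sumN: "D + card B \<le> 5" using d5[of v] AB finA finB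
    by (simp add: D_def N_def[symmetric] card_Un_disjoint[symmetric])
  have sp: "D * card B \<le> 6 \<and> (D * card B = 6 \<longrightarrow> (D = 2 \<and> card B = 3) \<or> (D = 3 \<and> card B = 2))"
    using small_prod[OF sumN] .
  have le12: "tp G v \<le> 12" using cE cE1 sE1 cE2 sp by (simp add: mult.commute)
  moreover have "tp G v = 12 \<longrightarrow> (\<exists>A B. A \<inter> B = {} \<and> A \<union> B = nb G v \<and>
     (\<forall>p\<in>A. \<forall>q\<in>B. adj G p q) \<and> (\<forall>p\<in>A. \<forall>q\<in>A. \<not> adj G p q) \<and> (\<forall>p\<in>B. \<forall>q\<in>B. \<not> adj G p q)
     \<and> card A * card B = 6 \<and> card A + card B \<le> 5)"
  proof
    assume t12: "tp G v = 12"
    have D6: "D * card B = 6" and e1: "(\<Sum>p\<in>B. dN p) = (\<Sum>p\<in>B. D)" and e2: "card E2 = card (A \<times> B)"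
      using cE cE1 sE1 cE2 sp t12 by (auto simp: mult.commute D_def card_cartesian_product)
    have E2eq: "E2 = A \<times> B" using card_subset_eq[OF _ E2sub e2] finA finB by auto
    have comp: "\<forall>p\<in>A. \<forall>q\<in>B. adj G p q"
    proof (intro ballI)
      fix p q assume "p \<in> A" "q \<in> B" then have "(p, q) \<in> E2" using E2eq by auto
      thus "adj G p q" by (simp add: E2_def)
    qed
    have Bind: "\<forall>p\<in>B. \<forall>q\<in>B. \<not> adj G p q"
    proof (intro ballI)
      fix p q assume p: "p \<in> B" and q: "q \<in> B"
      have "dN p = D" using sum_mono_inv[OF e1 _ p finB] dle DdN by (auto simp: B_def)
      moreover have "A \<subseteq> nb G p \<inter> N" using comp p AB by (auto simp: nb_def adj_sym)
      ultimately have "nb G p \<inter> N = A" using card_subset_eq[of "nb G p \<inter> N" A] finN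
        by (simp add: dN_def D_def)
      thus "\<not> adj G p q" using q by (auto simp: nb_def B_def)
    qed
    show "\<exists>A B. A \<inter> B = {} \<and> A \<union> B = nb G v \<and>
     (\<forall>p\<in>A. \<forall>q\<in>B. adj G p q) \<and> (\<forall>p\<in>A. \<forall>q\<in>A. \<not> adj G p q) \<and> (\<forall>p\<in>B. \<forall>q\<in>B. \<not> adj G p q)
     \<and> card A * card B = 6 \<and> card A + card B \<le> 5"
      using AB comp Aind Bind D6 sumN by (intro exI[of _ A] exI[of _ B]) (auto simp: N_def D_def)
  qed
  ultimately show ?thesis by blast
qed



lemma nonfull:
  assumes sg: "simple_graph G" and d5: "\<And>u. card (nb G u) \<le> 5"
    and PQ: "P \<inter> Q = {}" "P \<union> Q = nb G v"
    and comp: "\<forall>p\<in>P. \<forall>q\<in>Q. adj G p q"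
    and Pind: "\<forall>p\<in>P. \<forall>q\<in>P. \<not> adj G p q" and Qind: "\<forall>p\<in>Q. \<forall>q\<in>Q. \<not> adj G p q"
    and cP: "card P = 2" and cQ: "card Q = 3" and c: "c \<in> Q"
  shows "tp G c \<le> 10"
proof -
  obtain a b where ab: "P = {a, b}" "a \<noteq> b" using cP by (auto simp: card_2_iff)
  have finQ: "finite Q" using cQ card.infinite by fastforce
  have va: "adj G v a" "adj G v b" "adj G v c" using PQ ab c by (auto simp: nb_def)
  have ac: "adj G a c" "adj G b c" using comp ab c by auto
  have ca: "adj G c a" "adj G c b" using ac adj_sym by metis+
  have nab: "\<not> adj G a b" using Pind ab by auto
  have vnN: "v \<notin> nb G v" using adj_irrefl[OF sg] by (simp add: nb_def)
  have cNP: "nb G c \<inter> nb G v = P"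
  proof
    show "nb G c \<inter> nb G v \<subseteq> P" using PQ Qind c by (auto simp: nb_def)
    show "P \<subseteq> nb G c \<inter> nb G v" using PQ ca ab by (auto simp: nb_def)
  qed
  define X where "X = nb G c - {v, a, b}"
  have abN: "a \<in> nb G v" "b \<in> nb G v" using PQ ab by auto
  have vne: "v \<noteq> a" "v \<noteq> b" using abN vnN by auto
  have vab3: "card {v, a, b} = 3" using ab(2) vne by simp
  have cv: "adj G c v" using va(3) adj_sym by metis
  have vabsub: "{v, a, b} \<subseteq> nb G c" using cv ca by (simp add: nb_def)
  have finnbc: "finite (nb G c)" using finite_nb[OF sg] .
  have cX: "card X \<le> 2" unfolding X_def
    using card_Diff_subset[OF _ vabsub] vab3 d5[of c] finnbc finite_subset[OF vabsub] by simp
  have finX: "finite X" using finnbc by (simp add: X_def)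
  have Y1: "card (X \<inter> nb G s) \<le> 1" if s: "s \<in> P" for s
  proof -
    have sub: "insert v Q \<subseteq> nb G s" using comp s PQ by (auto simp: nb_def adj_sym)
    have c4: "card (insert v Q) = 4" using cQ finQ vnN PQ by auto
    have "X \<inter> nb G s \<subseteq> nb G s - insert v Q" using Qind c by (auto simp: X_def nb_def)
    moreover have "card (nb G s - insert v Q) \<le> 1"
      using card_Diff_subset[OF _ sub] c4 d5[of s] finite_nb[OF sg, of s] finite_subset[OF sub] by simp
    ultimately show ?thesis using finite_nb[OF sg, of s]
      by (meson card_mono finite_Diff order_trans)
  qed
  have Ya: "card (X \<inter> nb G a) \<le> 1" and Yb: "card (X \<inter> nb G b) \<le> 1" using Y1 ab by auto
  define XX where "XX = Sigma X (\<lambda>p. X - {p})"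
  have cXX: "card XX \<le> 2"
  proof -
    have "card XX = (\<Sum>p\<in>X. card (X - {p}))" unfolding XX_def using finX by (simp add: card_SigmaI)
    also have "\<dots> = card X * (card X - 1)" using finX by simp
    finally show ?thesis using small_prod2[OF cX] by simp
  qed
  define R where "R = {(v,a),(v,b),(a,v),(b,v)} \<union> ({a} \<times> (X \<inter> nb G a)) \<union> ((X \<inter> nb G a) \<times> {a})
      \<union> ({b} \<times> (X \<inter> nb G b)) \<union> ((X \<inter> nb G b) \<times> {b}) \<union> XX"
  have sub: "{(p, q). adj G c p \<and> adj G c q \<and> adj G p q} \<subseteq> R"
  proof
    fix t assume t: "t \<in> {(p, q). adj G c p \<and> adj G c q \<and> adj G p q}"
    obtain p q where pq: "t = (p, q)" by (cases t) auto
    have h: "p \<in> nb G c" "q \<in> nb G c" "adj G p q" using t pq by (auto simp: nb_def)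
    have pq_ne: "p \<noteq> q" using adj_irrefl[OF sg] h(3) by blast
    have notN: "\<not> adj G v y" if "y \<in> X" for y using that cNP ab by (auto simp: X_def nb_def)
    show "t \<in> R"
    proof -
      consider "p = v" | "p = a" | "p = b" | "p \<in> X" using h X_def by blast
      then show ?thesis
      proof cases
        case 1 then have "q \<in> P" using cNP h by (auto simp: nb_def)
        then show ?thesis using pq 1 ab by (auto simp: R_def)
      next
        case 2
        then consider "q = v" | "q \<in> X" using h nab pq_ne X_def by blast
        then show ?thesis using pq 2 h by cases (auto simp: R_def nb_def)
      next
        case 3
        then consider "q = v" | "q \<in> X" using h nab pq_ne X_def adj_sym by blast
        then show ?thesis using pq 3 h by cases (auto simp: R_def nb_def)
      next
        case 4
        then consider "q = a" | "q = b" | "q \<in> X" using h notN[of p] adj_sym X_def by blast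
        then show ?thesis using pq 4 h pq_ne by cases (auto simp: R_def nb_def XX_def adj_sym)
      qed
    qed
  qed
  have finR: "finite R" using finX by (auto simp: R_def XX_def)
  have "card R \<le> 4 + 1 + 1 + 1 + 1 + 2"
  proof -
    have c4: "card {(v,a),(v,b),(a,v),(b,v)} \<le> 4" using card_length[of "[(v,a),(v,b),(a,v),(b,v)]"] by simp
    have "card R \<le> card {(v,a),(v,b),(a,v),(b,v)} + card ({a} \<times> (X \<inter> nb G a)) + card ((X \<inter> nb G a) \<times> {a})
      + card ({b} \<times> (X \<inter> nb G b)) + card ((X \<inter> nb G b) \<times> {b}) + card XX"
      unfolding R_def by ((rule order_trans[OF card_Un_le] add_mono)+, simp_all)
    also have "\<dots> \<le> 4 + 1 + 1 + 1 + 1 + 2"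
      using c4 Ya Yb cXX by (simp add: card_cartesian_product)
    finally show ?thesis .
  qed
  then show ?thesis unfolding tp_def using card_mono[OF finR sub] by simp
qed



lemma full_nbrs:
  assumes sg: "simple_graph G" and cn: "clique_number G \<le> 3" and d5: "\<And>u. card (nb G u) \<le> 5"
    and t: "tp G w = 12"
  shows "3 \<le> card {c \<in> nb G w. tp G c \<le> 10}"
proof -
  obtain A B where AB: "A \<inter> B = {}" "A \<union> B = nb G w" "\<forall>p\<in>A. \<forall>q\<in>B. adj G p q"
    "\<forall>p\<in>A. \<forall>q\<in>A. \<not> adj G p q" "\<forall>p\<in>B. \<forall>q\<in>B. \<not> adj G p q"
    "card A * card B = 6" "card A + card B \<le> 5"
    using mantel[OF sg cn d5, of w] t by blast
  have fin: "finite {c \<in> nb G w. tp G c \<le> 10}" using finite_nb[OF sg] by simp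
  have "(card A = 2 \<and> card B = 3) \<or> (card A = 3 \<and> card B = 2)" using small_prod[OF AB(7)] AB(6) by simp
  then obtain Q where Q: "card Q = 3" "Q \<subseteq> {c \<in> nb G w. tp G c \<le> 10}"
  proof
    assume c: "card A = 2 \<and> card B = 3"
    have "B \<subseteq> {c \<in> nb G w. tp G c \<le> 10}"
      using nonfull[OF sg d5 AB(1,2,3,4,5)] c AB(2) by auto
    thus ?thesis using that c by blast
  next
    assume c: "card A = 3 \<and> card B = 2"
    have comp: "\<forall>p\<in>B. \<forall>q\<in>A. adj G p q" using AB(3) adj_sym by blast
    have BA: "B \<inter> A = {}" "B \<union> A = nb G w" using AB(1,2) by auto
    have "A \<subseteq> {c \<in> nb G w. tp G c \<le> 10}"
      using nonfull[OF sg d5 BA comp AB(5) AB(4)] c AB(2) by auto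
    thus ?thesis using that c by blast
  qed
  thus ?thesis using card_mono[OF fin Q(2)] by simp
qed

lemma global:
  assumes G: "G \<in> graph_class 5 3"
  shows "8 * k_t 3 G \<le> 15 * card (verts G)"
proof -
  have sg: "simple_graph G" and md: "max_degree G \<le> 5" and cn: "clique_number G \<le> 3"
    using G by (auto simp: graph_class_def)
  have d5: "\<And>u. card (nb G u) \<le> 5" using nb_le5[OF sg md] .
  define V where "V = verts G"
  have finV: "finite V" using finite_V[OF sg] V_def by simp
  define F where "F = {v \<in> V. tp G v = 12}"
  define M where "M = V - F"
  have finF: "finite F" and finM: "finite M" using finV by (auto simp: F_def M_def)
  have tpM: "tp G v \<le> 10" if "v \<in> M" for v
  proof -
    have "tp G v \<le> 12" using mantel[OF sg cn d5] by blast
    moreover have "tp G v \<noteq> 12" using that by (simp add: M_def F_def)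
    moreover have "even (tp G v)" using tp_even[OF sg] .
    ultimately show ?thesis by presburger
  qed
  have VFM: "V = F \<union> M" "F \<inter> M = {}" by (auto simp: M_def F_def)
  have cV: "card V = card F + card M" using VFM finF finM card_Un_disjoint by metis
  have "(\<Sum>v\<in>V. tp G v) = (\<Sum>v\<in>F. tp G v) + (\<Sum>v\<in>M. tp G v)"
    using VFM finF finM sum.union_disjoint by metis
  also have "\<dots> \<le> 12 * card F + 10 * card M"
  proof (rule add_mono)
    show "(\<Sum>v\<in>F. tp G v) \<le> 12 * card F" using sum_bounded_above[of F "tp G" 12] by (simp add: F_def)
    show "(\<Sum>v\<in>M. tp G v) \<le> 10 * card M" using sum_bounded_above[of M "tp G" 10] tpM by simp
  qed
  finally have st: "6 * k_t 3 G \<le> 12 * card F + 10 * card M"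
    using sum_tp_T3[OF sg] T3_k3[OF sg] V_def by simp
  define Pr where "Pr = Sigma F (\<lambda>w. nb G w \<inter> M)"
  have "3 * card F \<le> card Pr"
  proof -
    have "card Pr = (\<Sum>w\<in>F. card (nb G w \<inter> M))" unfolding Pr_def
      using finF finite_nb[OF sg] by (simp add: card_SigmaI)
    moreover have "(\<Sum>w\<in>F. 3) \<le> (\<Sum>w\<in>F. card (nb G w \<inter> M))"
    proof (rule sum_mono)
      fix w assume w: "w \<in> F"
      have "{c \<in> nb G w. tp G c \<le> 10} \<subseteq> nb G w \<inter> M"
        using nb_sub[OF sg] by (auto simp: M_def F_def V_def)
      then have "card {c \<in> nb G w. tp G c \<le> 10} \<le> card (nb G w \<inter> M)"
        using finite_nb[OF sg] by (intro card_mono) auto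
      thus "3 \<le> card (nb G w \<inter> M)" using full_nbrs[OF sg cn d5, of w] w by (simp add: F_def)
    qed
    ultimately show ?thesis by (simp add: mult.commute)
  qed
  moreover have "card Pr \<le> 5 * card M"
  proof -
    have "prod.swap ` Pr \<subseteq> Sigma M (nb G)" by (auto simp: Pr_def nb_def adj_sym)
    then have "card (prod.swap ` Pr) \<le> card (Sigma M (nb G))"
      using finM finite_nb[OF sg] by (intro card_mono) auto
    moreover have "card (prod.swap ` Pr) = card Pr" by (rule card_image) simp
    moreover have "card (Sigma M (nb G)) = (\<Sum>c\<in>M. card (nb G c))"
      using finM finite_nb[OF sg] by (simp add: card_SigmaI)
    moreover have "(\<Sum>c\<in>M. card (nb G c)) \<le> 5 * card M"
      using sum_bounded_above[of M "\<lambda>c. card (nb G c)" 5] d5 by simp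
    ultimately show ?thesis by linarith
  qed
  ultimately have "3 * card F \<le> 5 * card M" by linarith
  with st cV have "24 * k_t 3 G \<le> 45 * card V" by linarith
  then show ?thesis unfolding V_def by linarith
qed



abbreviation J where "J \<equiv> join C5 I3"

lemma lt5: "(i::nat) < 5 \<longleftrightarrow> i = 0 \<or> i = 1 \<or> i = 2 \<or> i = 3 \<or> i = 4" by arith

lemma vertsJ: "verts J = {0,1,2,3,4,5,6,7}"
  by (auto simp: join_def C5_def I3_def verts_def)

lemma edgesJ: "edges J = {{0,5},{0,6},{0,7},{1,5},{1,6},{1,7},{2,5},{2,6},{2,7},{3,5},{3,6},{3,7},{4,5},{4,6},{4,7},
   {0,1},{1,2},{2,3},{3,4},{4,0}}"
proof -
  have c: "{{i, (i + 1) mod 5} | i::nat. i < 5} = {{0,1},{1,2},{2,3},{3,4},{4,0}}"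
  proof -
    have "{i::nat. i < 5} = {0,1,2,3,4}" using lt5 by blast
    moreover have "{{i, (i + 1) mod 5} | i::nat. i < 5} = (\<lambda>i. {i, (i + 1) mod 5}) ` {i. i < 5}" by blast
    ultimately show ?thesis by (simp add: numeral_2_eq_2)
  qed
  have v: "verts C5 = {0,1,2,3,4}" "verts I3 = {5,6,7}" by (auto simp: C5_def I3_def verts_def)
  have j: "edges J = edges C5 \<union> edges I3 \<union> {{a, b} |a b. a \<in> verts C5 \<and> b \<in> verts I3}"
    by (simp add: join_def edges_def)
  have e1: "edges C5 = {{0,1},{1,2},{2,3},{3,4},{4,0}}" unfolding C5_def edges_def snd_conv by (rule c)
  have e2: "edges I3 = {}" by (simp add: I3_def edges_def)
  have e3: "{{a, b} |a b. a \<in> verts C5 \<and> b \<in> verts I3} = {{0,5},{0,6},{0,7},{1,5},{1,6},{1,7},{2,5},{2,6},{2,7},{3,5},{3,6},{3,7},{4,5},{4,6},{4,7}}"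
  proof -
    have "{{a, b} |a b. a \<in> verts C5 \<and> b \<in> verts I3} = (\<lambda>(a,b). {a,b}) ` (verts C5 \<times> verts I3)" by auto
    then show ?thesis unfolding v by simp
  qed
  show ?thesis unfolding j e1 e2 e3 by simp
qed

lemma nbJ: "nb J v = (if v = 0 then {1,4,5,6,7} else if v = 1 then {0,2,5,6,7} else if v = 2 then {1,3,5,6,7}
   else if v = 3 then {2,4,5,6,7} else if v = 4 then {0,3,5,6,7} else if v = 5 \<or> v = 6 \<or> v = 7 then {0,1,2,3,4} else {})"
  unfolding nb_def adj_def edgesJ by (auto simp: doubleton_eq_iff)



lemma sgJ: "simple_graph J"
  unfolding simple_graph_def vertsJ edgesJ by auto

lemma mdJ: "max_degree J \<le> 5"
proof -
  have "\<forall>v\<in>verts J. degree J v \<le> 5" using nb_le5 card_nb[OF sgJ, symmetric]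
    unfolding vertsJ by (auto simp: nbJ)
  thus ?thesis unfolding max_degree_def using finite_V[OF sgJ] by (auto intro: Max.boundedI)
qed

lemma adjJ: "adj J u v \<longleftrightarrow> v \<in> nb J u" by (simp add: nb_def)

lemma cnJ: "clique_number J \<le> 3"
  unfolding clique_number_def
proof (rule Max.boundedI)
  have "{card S |S. is_clique J S} \<subseteq> card ` Pow (verts J)" unfolding is_clique_def by auto
  thus "finite {card S |S. is_clique J S}" using finite_V[OF sgJ] finite_subset by blast
  have "is_clique J {}" by (simp add: is_clique_def)
  thus "{card S |S. is_clique J S} \<noteq> {}" by blast
next
  fix n assume "n \<in> {card S |S. is_clique J S}"
  then obtain S where S: "is_clique J S" "n = card S" by blast
  have Sv: "S \<subseteq> {0,1,2,3,4,5,6,7}" using S vertsJ by (simp add: is_clique_def)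
  have ad: "u \<in> S \<Longrightarrow> w \<in> S \<Longrightarrow> u \<noteq> w \<Longrightarrow> adj J u w" for u w
    using S by (simp add: is_clique_def adj_def)
  define L where "L = S \<inter> {0,1,2,3,4}"
  define H where "H = S \<inter> {5,6,7}"
  have SLH: "S = L \<union> H" using Sv by (auto simp: L_def H_def)
  have fL: "finite L" and fH: "finite H" by (auto simp: L_def H_def)
  have "card H \<le> Suc 0" unfolding card_le_Suc0_iff_eq[OF fH]
  proof (intro ballI)
    fix x y assume "x \<in> H" "y \<in> H"
    then show "x = y" using ad[of x y] by (auto simp: H_def adjJ nbJ)
  qed
  moreover have "card L \<le> 2"
  proof (rule ccontr)
    assume "\<not> card L \<le> 2"
    then obtain T where T: "T \<subseteq> L" "card T = 3" using obtain_subset_with_card_n[of 3 L] by auto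
    then obtain x y z where xyz: "T = {x,y,z}" "x \<noteq> y" "y \<noteq> z" "x \<noteq> z" by (auto simp: card_3_iff)
    have xs: "x \<in> {0,1,2,3,4}" "y \<in> {0,1,2,3,4}" "z \<in> {0,1,2,3,4}" using T xyz by (auto simp: L_def)
    have "adj J x y" "adj J y z" "adj J x z" using ad T xyz by (auto simp: L_def)
    then show False using xs xyz by (auto simp: adjJ nbJ)
  qed
  ultimately have "card S \<le> 3" using SLH fL fH card_Un_le[of L H] by simp
  thus "n \<le> 3" using S by simp
qed

lemma k3J: "k_t 3 J = 15"
proof -
  have "(\<Sum>v\<in>verts J. tp J v) = 90"
    unfolding vertsJ by (simp add: tp_sum[OF sgJ] nbJ)
  thus ?thesis using sum_tp_T3[OF sgJ] T3_k3[OF sgJ] by simp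
qed


theorem mainTheorem17:
  shows "f_t 3 5 3 = 15 / 8 \<and> rho 3 (join C5 I3) = 15 / 8"
proof -
  have rJ: "rho 3 J = 15 / 8" by (simp add: rho_def k3J vertsJ)
  have JX: "J \<in> graph_class 5 3" by (simp add: graph_class_def sgJ mdJ cnJ)
  have "f_t 3 5 3 = 15 / 8" unfolding f_t_def
  proof (rule cSup_eq_maximum)
    show "15 / 8 \<in> {rho 3 G |G. G \<in> graph_class 5 3 \<and> 1 \<le> card (verts G)}"
    proof -
      have "1 \<le> card (verts J)" by (simp add: vertsJ)
      then show ?thesis using JX rJ by (intro CollectI exI[of _ J]) simp
    qed
  next
    fix x assume "x \<in> {rho 3 G |G. G \<in> graph_class 5 3 \<and> 1 \<le> card (verts G)}"
    then obtain G where G: "G \<in> graph_class 5 3" "1 \<le> card (verts G)" "x = rho 3 G" by blast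
    have "real (8 * k_t 3 G) \<le> real (15 * card (verts G))"
      using global[OF G(1)] by (simp only: of_nat_le_iff)
    moreover have "real (card (verts G)) > 0" using G(2) by simp
    ultimately show "x \<le> 15 / 8" using G(3) by (simp add: rho_def divide_le_eq)
  qed
  with rJ show ?thesis by simp
qed

end
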